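(* Let $f,g$ be packed words of length $n$. Then $g\leq f$ if, and only if, $g$ is a (strict) T-partition of the topology $\mathcal{T}_f$.
   Context: $[n]=\{1,\ldots,n\}$. A packed word of length $n$ is a word $f=f(1)\ldots f(n)$ of positive integers with $\{f(1),\ldots,f(n)\}=\{1,\ldots,\max f\}$. For packed words $f,g$ of the same length $n$, $g\leq f$ means: for all $i,j\in[n]$, $f(i)\leq f(j)\Rightarrow g(i)\leq g(j)$; $f(i)>f(j)$ and $i<j$ $\Rightarrow g(i)>g(j)$; $f(i)=f(j)\Rightarrow g(i)=g(j)$. For a packed word $f$ of length $n$, $\mathcal{T}_f$ is the topology on $[n]$ whose associated preorder is $i\leq j$ iff $f(i)\leq f(j)$ (its open sets are $\emptyset$ and the sets $f^{-1}(\{i,\ldots,\max f\})$). For a topology $\mathcal{T}$ on $[n]$: $i\leq_{\mathcal{T}}j$ iff every open set containing $i$ contains $j$; $i\sim_{\mathcal{T}}j$ iff $i\leq_{\mathcal{T}}j$ and $j\leq_{\mathcal{T}}i$; $i<_{\mathcal{T}}j$ iff $i\leq_{\mathcal{T}}j$ and not $j\leq_{\mathcal{T}}i$. A (strict) T-partition of $\mathcal{T}$ is a packed word $g$ of length $n$ (viewed as a surjection $[n]\to[\max g]$) such that: $i\leq_{\mathcal{T}}j\Rightarrow g(i)\leq g(j)$; $i<_{\mathcal{T}}j$ and $i>j$ $\Rightarrow g(i)<g(j)$; and if $i<j<k$, $i\sim_{\mathcal{T}}k$ and $g(i)=g(j)=g(k)$, then $i\sim_{\mathcal{T}}j$ and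 $j\sim_{\mathcal{T}}k$. *)

theory Defs
  imports Main
begin

text \<open>Words of length n are functions nat => nat, read on the positions {1..n}.\<close>

definition packed :: "nat \<Rightarrow> (nat \<Rightarrow> nat) \<Rightarrow> bool" where
  "packed n f \<longleftrightarrow> (\<exists>m. f ` {1..n} = {1..m})"

definition max_word :: "nat \<Rightarrow> (nat \<Rightarrow> nat) \<Rightarrow> nat" where
  "max_word n f = Max (f ` {1..n})"

definition word_le :: "nat \<Rightarrow> (nat \<Rightarrow> nat) \<Rightarrow> (nat \<Rightarrow> nat) \<Rightarrow> bool" where
  "word_le n g f \<longleftrightarrow>
     (\<forall>i\<in>{1..n}. \<forall>j\<in>{1..n}.
        (f i \<le> f j \<longrightarrow> g i \<le> g j) \<and>
        (f i > f j \<and> i < j \<longrightarrow> g i > g j) \<and>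
        (f i = f j \<longrightarrow> g i = g j))"

definition topo_of_word :: "nat \<Rightarrow> (nat \<Rightarrow> nat) \<Rightarrow> nat set set" where
  "topo_of_word n f = {{}} \<union> {{x \<in> {1..n}. i \<le> f x} | i. 1 \<le> i \<and> i \<le> max_word n f}"

definition leT :: "nat set set \<Rightarrow> nat \<Rightarrow> nat \<Rightarrow> bool" where
  "leT T i j \<longleftrightarrow> (\<forall>U\<in>T. i \<in> U \<longrightarrow> j \<in> U)"

definition simT :: "nat set set \<Rightarrow> nat \<Rightarrow> nat \<Rightarrow> bool" where
  "simT T i j \<longleftrightarrow> leT T i j \<and> leT T j i"

definition ltT :: "nat set set \<Rightarrow> nat \<Rightarrow> nat \<Rightarrow> bool" where
  "ltT T i j \<longleftrightarrow> leT T i j \<and> \<not> leT T j i"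

definition strict_T_partition :: "nat \<Rightarrow> nat set set \<Rightarrow> (nat \<Rightarrow> nat) \<Rightarrow> bool" where
  "strict_T_partition n T g \<longleftrightarrow>
     packed n g \<and>
     (\<forall>i\<in>{1..n}. \<forall>j\<in>{1..n}.
        (leT T i j \<longrightarrow> g i \<le> g j) \<and>
        (ltT T i j \<and> i > j \<longrightarrow> g i < g j)) \<and>
     (\<forall>i\<in>{1..n}. \<forall>j\<in>{1..n}. \<forall>k\<in>{1..n}.
        i < j \<and> j < k \<and> simT T i k \<and> g i = g j \<and> g j = g k
          \<longrightarrow> simT T i j \<and> simT T j k)"

end

theory Submission
  imports Defs
begin

lemma leT_topo:
  assumes "packed n f" "i \<in> {1..n}" "j \<in> {1..n}"
  shows "leT (topo_of_word n f) i j \<longleftrightarrow> f i \<le> f j"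
proof -
  obtain m where m: "f ` {1..n} = {1..m}" using assms(1) unfolding packed_def by blast
  have fi: "f i \<in> {1..m}" using m assms(2) by blast
  hence ne: "{1..m} \<noteq> {}" by blast
  have mx: "max_word n f = m" unfolding max_word_def m using ne by (simp add: Max_eq_iff)
  show ?thesis
  proof
    assume L: "leT (topo_of_word n f) i j"
    have U: "{x \<in> {1..n}. f i \<le> f x} \<in> topo_of_word n f"
      unfolding topo_of_word_def mx using fi by (intro UnI2 CollectI exI[of _ "f i"]) simp
    have I: "i \<in> {x \<in> {1..n}. f i \<le> f x}" using assms(2) by simp
    have L': "\<forall>U\<in>topo_of_word n f. i \<in> U \<longrightarrow> j \<in> U" using L unfolding leT_def .
    have "j \<in> {x \<in> {1..n}. f i \<le> f x}" using mp[OF bspec[OF L' U] I] .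
    thus "f i \<le> f j" by simp
  next
    assume "f i \<le> f j"
    thus "leT (topo_of_word n f) i j"
      unfolding leT_def topo_of_word_def using assms(3) by auto
  qed
qed

lemma wl: "word_le n g f \<Longrightarrow> i \<in> {1..n} \<Longrightarrow> j \<in> {1..n} \<Longrightarrow>
  (f i \<le> f j \<longrightarrow> g i \<le> g j) \<and> (f i > f j \<and> i < j \<longrightarrow> g i > g j)"
  unfolding word_le_def by blast

theorem lemma18:
  fixes n :: nat and f g :: "nat \<Rightarrow> nat"
  assumes "packed n f" and "packed n g"
  shows "word_le n g f \<longleftrightarrow> strict_T_partition n (topo_of_word n f) g"
proof -
  have le: "\<And>i j. i \<in> {1..n} \<Longrightarrow> j \<in> {1..n} \<Longrightarrow> leT (topo_of_word n f) i j \<longleftrightarrow> f i \<le> f j"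
    using leT_topo[OF assms(1)] by blast
  have sim: "\<And>i j. i \<in> {1..n} \<Longrightarrow> j \<in> {1..n} \<Longrightarrow> simT (topo_of_word n f) i j \<longleftrightarrow> f i = f j"
    unfolding simT_def by (auto simp: le)
  have lt: "\<And>i j. i \<in> {1..n} \<Longrightarrow> j \<in> {1..n} \<Longrightarrow> ltT (topo_of_word n f) i j \<longleftrightarrow> f i < f j"
    unfolding ltT_def by (auto simp: le)
  show ?thesis
  proof
    assume W: "word_le n g f"
    have C3: "simT (topo_of_word n f) i j \<and> simT (topo_of_word n f) j k"
      if A: "i \<in> {1..n}" "j \<in> {1..n}" "k \<in> {1..n}"
        "i < j \<and> j < k \<and> simT (topo_of_word n f) i k \<and> g i = g j \<and> g j = g k" for i j k
    proof -
      have fik: "f i = f k" using A(4) sim[OF A(1,3)] by simp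
      have "f i = f j"
      proof (rule ccontr)
        assume "f i \<noteq> f j"
        then consider "f j > f k" | "f i > f j" using fik by linarith
        thus False
        proof cases
          case 1 have "g j > g k" using wl[OF W A(2,3)] 1 A(4) by simp
          thus False using A(4) by simp
        next
          case 2 have "g i > g j" using wl[OF W A(1,2)] 2 A(4) by simp
          thus False using A(4) by simp
        qed
      qed
      thus "simT (topo_of_word n f) i j \<and> simT (topo_of_word n f) j k"
        using sim[OF A(1,2)] sim[OF A(2,3)] fik by simp
    qed
    show "strict_T_partition n (topo_of_word n f) g"
      unfolding strict_T_partition_def
    proof (intro conjI ballI impI)
      show "\<And>i j k. i \<in> {1..n} \<Longrightarrow> j \<in> {1..n} \<Longrightarrow> k \<in> {1..n} \<Longrightarrow> i < j \<and> j < k \<and> simT (topo_of_word n f) i k \<and> g i = g j \<and> g j = g k \<Longrightarrow> simT (topo_of_word n f) i j" using C3 by blast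
      show "\<And>i j k. i \<in> {1..n} \<Longrightarrow> j \<in> {1..n} \<Longrightarrow> k \<in> {1..n} \<Longrightarrow> i < j \<and> j < k \<and> simT (topo_of_word n f) i k \<and> g i = g j \<and> g j = g k \<Longrightarrow> simT (topo_of_word n f) j k" using C3 by blast
    next
      show "packed n g" by fact
    next
      fix i j assume "i \<in> {1..n}" "j \<in> {1..n}" "leT (topo_of_word n f) i j"
      hence "f i \<le> f j" using le by simp
      thus "g i \<le> g j" using wl[OF W \<open>i \<in> {1..n}\<close> \<open>j \<in> {1..n}\<close>] by simp
    next
      fix i j assume I: "i \<in> {1..n}" "j \<in> {1..n}" "ltT (topo_of_word n f) i j \<and> j < i"
      hence "f i < f j" "j < i" using lt[OF I(1,2)] by simp_all
      thus "g i < g j" using wl[OF W I(2) I(1)] by simp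
    qed
  next
    assume S: "strict_T_partition n (topo_of_word n f) g"
    have P: "\<And>a b. a \<in> {1..n} \<Longrightarrow> b \<in> {1..n} \<Longrightarrow> leT (topo_of_word n f) a b \<Longrightarrow> g a \<le> g b"
      and Q: "\<And>a b. a \<in> {1..n} \<Longrightarrow> b \<in> {1..n} \<Longrightarrow> ltT (topo_of_word n f) a b \<Longrightarrow> b < a \<Longrightarrow> g a < g b"
      using S unfolding strict_T_partition_def by blast+
    have "(f i \<le> f j \<longrightarrow> g i \<le> g j) \<and> (f i > f j \<and> i < j \<longrightarrow> g i > g j) \<and> (f i = f j \<longrightarrow> g i = g j)"
      if A: "i \<in> {1..n}" "j \<in> {1..n}" for i j
    proof (intro conjI impI)
      assume "f i \<le> f j" thus "g i \<le> g j" using P[OF A] le[OF A] by simp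
    next
      assume "f j < f i \<and> i < j" thus "g j < g i" using Q[OF A(2) A(1)] lt[OF A(2) A(1)] by simp
    next
      assume "f i = f j"
      hence "g i \<le> g j" "g j \<le> g i" using P[OF A] P[OF A(2) A(1)] le[OF A] le[OF A(2) A(1)] by simp_all
      thus "g i = g j" by simp
    qed
    thus "word_le n g f" unfolding word_le_def by blast
  qed
qed

end
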